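(* Let $R=(r_{ij})$ be a real symmetric $n\times n$ matrix with zero diagonal and $\rho(|R|)<1$, with belief-propagation estimate $Z^{\mathrm{bp}}$ and backtrackless adjacency matrix $R'$ (defined in the context). Then $$\det(I-R)^{-1}=Z^{\mathrm{bp}}\times\det(I-R')^{-1}.$$
   Context: $|R|=(|r_{ij}|)$, $\rho$ the spectral radius. $G$ is the graph on $V=\{1,\dots,n\}$ with undirected edge $\{i,j\}$ whenever $r_{ij}\neq0$; $\partial i$ is the neighbour set of $i$; each undirected edge gives directed edges $(ij),(ji)$. GaBP messages: $\alpha_{ij}=\lim_t\alpha^{(t)}_{ij}$ with $\alpha^{(0)}_{ij}=0$, $\alpha^{(t+1)}_{ij}=r_{ij}^2(1-\sum_{k\in\partial i\setminus j}\alpha^{(t)}_{ki})^{-1}$ (convergent when $\rho(|R|)<1$, with $1-\alpha_{i\setminus j}>0$); $\alpha_{i\setminus j}=\sum_{k\in\partial i\setminus j}\alpha_{ki}$. $Z_i^{\mathrm{bp}}=(1-\sum_{k\in\partial i}\alpha_{ki})^{-1}$, $Z_{ij}^{\mathrm{bp}}=\det\begin{pmatrix}1-\alpha_{i\setminus j} & -r_{ij}\\ -r_{ij} & 1-\alpha_{j\setminus i}\end{pmatrix}^{-1}$, $Z^{\mathrm{bp}}=\prod_{i\in V}Z_i^{\mathrm{bp}}\prod_{\{i,j\}\in G}\frac{Z_{ij}^{\mathrm{bp}}}{Z_i^{\mathrm{bp}}Z_j^{\mathrm{bp}}}$. Let $r'_{ij}=\frac{r_{ij}}{1-\alpha_{i\setminus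 j}}$. The matrix $R'$ has rows and columns indexed by directed edges of $G$, with $R'_{(ij),(kl)}=r'_{kl}$ if $j=k$ and $i\neq l$, and $0$ otherwise. *)

theory Defs
  imports "Jordan_Normal_Form.Spectral_Radius" "Jordan_Normal_Form.Determinant"
begin

definition nbrs :: "nat \<Rightarrow> real mat \<Rightarrow> nat \<Rightarrow> nat set" where
  "nbrs n R i = {k. k < n \<and> R $$ (i, k) \<noteq> 0}"

definition dir_edges :: "nat \<Rightarrow> real mat \<Rightarrow> (nat \<times> nat) set" where
  "dir_edges n R = {(i, j). i < n \<and> j < n \<and> R $$ (i, j) \<noteq> 0}"

definition undir_edges :: "nat \<Rightarrow> real mat \<Rightarrow> (nat \<times> nat) set" where
  "undir_edges n R = {(i, j). i < j \<and> j < n \<and> R $$ (i, j) \<noteq> 0}"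

fun alpha_iter :: "nat \<Rightarrow> real mat \<Rightarrow> nat \<Rightarrow> nat \<Rightarrow> nat \<Rightarrow> real" where
  "alpha_iter n R 0 i j = 0"
| "alpha_iter n R (Suc t) i j =
     (R $$ (i, j))\<^sup>2 / (1 - (\<Sum>k\<in>nbrs n R i - {j}. alpha_iter n R t k i))"

definition alpha :: "nat \<Rightarrow> real mat \<Rightarrow> nat \<Rightarrow> nat \<Rightarrow> real" where
  "alpha n R i j = lim (\<lambda>t. alpha_iter n R t i j)"

definition alpha_excl :: "nat \<Rightarrow> real mat \<Rightarrow> nat \<Rightarrow> nat \<Rightarrow> real" where
  "alpha_excl n R i j = (\<Sum>k\<in>nbrs n R i - {j}. alpha n R k i)"

definition Z_node :: "nat \<Rightarrow> real mat \<Rightarrow> nat \<Rightarrow> real" where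
  "Z_node n R i = inverse (1 - (\<Sum>k\<in>nbrs n R i. alpha n R k i))"

definition Z_edge :: "nat \<Rightarrow> real mat \<Rightarrow> nat \<Rightarrow> nat \<Rightarrow> real" where
  "Z_edge n R i j = inverse ((1 - alpha_excl n R i j) * (1 - alpha_excl n R j i)
                              - (- R $$ (i, j)) * (- R $$ (i, j)))"

definition Z_bp :: "nat \<Rightarrow> real mat \<Rightarrow> real" where
  "Z_bp n R = (\<Prod>i<n. Z_node n R i) *
     (\<Prod>(i, j)\<in>undir_edges n R. Z_edge n R i j / (Z_node n R i * Z_node n R j))"

definition r_prime :: "nat \<Rightarrow> real mat \<Rightarrow> nat \<Rightarrow> nat \<Rightarrow> real" where
  "r_prime n R k l = R $$ (k, l) / (1 - alpha_excl n R k l)"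

definition R_prime :: "nat \<Rightarrow> real mat \<Rightarrow> (nat \<times> nat) \<Rightarrow> (nat \<times> nat) \<Rightarrow> real" where
  "R_prime n R e f = (if snd e = fst f \<and> fst e \<noteq> snd f then r_prime n R (fst f) (snd f) else 0)"

definition det_on :: "'a set \<Rightarrow> ('a \<Rightarrow> 'a \<Rightarrow> real) \<Rightarrow> real" where
  "det_on S M = (\<Sum>p | p permutes S. of_int (sign p) * (\<Prod>x\<in>S. M x (p x)))"

end

theory Submission
  imports Defs
begin


lemma smult_pow_mat:
  assumes "B \<in> carrier_mat n n"
  shows "(a \<cdot>\<^sub>m B) ^\<^sub>m k = (a ^ k) \<cdot>\<^sub>m (B ^\<^sub>m k :: 'a :: comm_ring_1 mat)"
proof (induction k)
  case 0 then show ?case using assms by (intro eq_matI) auto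
next
  case (Suc k)
  have "(a \<cdot>\<^sub>m B) ^\<^sub>m Suc k = ((a ^ k) \<cdot>\<^sub>m (B ^\<^sub>m k)) * (a \<cdot>\<^sub>m B)" using Suc by simp
  also have "\<dots> = (a ^ k) \<cdot>\<^sub>m ((B ^\<^sub>m k) * (a \<cdot>\<^sub>m B))"
    by (rule mult_smult_assoc_mat) (use assms in auto)
  also have "(B ^\<^sub>m k) * (a \<cdot>\<^sub>m B) = a \<cdot>\<^sub>m (B ^\<^sub>m k * B)"
    by (rule mult_smult_distrib) (use assms in auto)
  finally show ?case using assms by (intro eq_matI) (auto simp: ac_simps)
qed

lemma eig_scale:
  assumes B: "(B :: complex mat) \<in> carrier_mat n n" and ev: "eigenvalue (a \<cdot>\<^sub>m B) mu" and a: "a \<noteq> 0"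
  shows "eigenvalue B (mu / a)"
proof -
  obtain v where v: "v \<in> carrier_vec n" "v \<noteq> 0\<^sub>v n" and eq: "(a \<cdot>\<^sub>m B) *\<^sub>v v = mu \<cdot>\<^sub>v v"
    using ev B unfolding eigenvalue_def eigenvector_def by auto
  have "(a \<cdot>\<^sub>m B) *\<^sub>v v = a \<cdot>\<^sub>v (B *\<^sub>v v)"
    using B v by (intro eq_vecI) (auto simp: scalar_prod_def sum_distrib_left ac_simps)
  then have "a \<cdot>\<^sub>v (B *\<^sub>v v) = mu \<cdot>\<^sub>v v" using eq by simp
  then have "B *\<^sub>v v = (mu / a) \<cdot>\<^sub>v v"
  proof -
    assume h: "a \<cdot>\<^sub>v (B *\<^sub>v v) = mu \<cdot>\<^sub>v v"
    show ?thesis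
    proof (rule eq_vecI)
      fix i assume i: "i < dim_vec ((mu / a) \<cdot>\<^sub>v v)"
      then have "(a \<cdot>\<^sub>v (B *\<^sub>v v)) $ i = (mu \<cdot>\<^sub>v v) $ i" using h by simp
      then have "a * (B *\<^sub>v v) $ i = mu * v $ i" using i B v by simp
      then show "(B *\<^sub>v v) $ i = ((mu / a) \<cdot>\<^sub>v v) $ i" using i a v by (simp add: field_simps)
    qed (use B v in simp)
  qed
  then show ?thesis using v B unfolding eigenvalue_def eigenvector_def by auto
qed

lemma power_decay:
  assumes B: "(B :: complex mat) \<in> carrier_mat n n" and n: "n > 0" and sr: "spectral_radius B < 1"
  shows "\<exists>s c. 0 < s \<and> s < 1 \<and> (\<forall>k i j. i < n \<longrightarrow> j < n \<longrightarrow> norm ((B ^\<^sub>m k) $$ (i, j)) \<le> c * s ^ k)"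
proof -
  define \<rho> where "\<rho> = spectral_radius B"
  have "\<rho> \<in> norm ` spectrum B" unfolding \<rho>_def by (rule spectral_radius_mem_max(1)[OF B n])
  then have r0: "\<rho> \<ge> 0" by auto
  define s where "s = (1 + \<rho>) / 2"
  have s0: "0 < s" and s1: "s < 1" and rs: "\<rho> < s" using r0 sr unfolding s_def \<rho>_def by auto
  define C where "C = complex_of_real (1 / s) \<cdot>\<^sub>m B"
  have C: "C \<in> carrier_mat n n" using B unfolding C_def by simp
  have srC: "spectral_radius C < 1"
  proof -
    have "spectral_radius C \<in> norm ` spectrum C" by (rule spectral_radius_mem_max(1)[OF C n])
    then obtain mu where mu: "eigenvalue C mu" and eqm: "spectral_radius C = norm mu"
      unfolding spectrum_def by auto
    have "eigenvalue B (mu / complex_of_real (1 / s))"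
      using eig_scale[OF B, of "complex_of_real (1 / s)" mu] mu s0 unfolding C_def by simp
    moreover have "mu / complex_of_real (1 / s) = mu * complex_of_real s" using s0 by (simp add: field_simps)
    ultimately have "eigenvalue B (mu * complex_of_real s)" by simp
    then have "norm (mu * complex_of_real s) \<le> \<rho>"
      unfolding \<rho>_def by (intro spectral_radius_mem_max(2)[OF B n]) (auto simp: spectrum_def)
    then have "norm mu * s \<le> \<rho>" using s0 by (simp add: norm_mult)
    then have "norm mu * s < 1 * s" using rs s1 by linarith
    then have "norm mu < 1" using s0 by simp
    then show ?thesis using eqm by simp
  qed
  obtain c where c: "\<And>k. norm_bound (C ^\<^sub>m k) c"
    using spectral_radius_jnf_norm_bound_less_1_upper_triangular[OF C srC] by blast
  have "\<forall>k i j. i < n \<longrightarrow> j < n \<longrightarrow> norm ((B ^\<^sub>m k) $$ (i, j)) \<le> c * s ^ k"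
  proof (intro allI impI)
    fix k i j assume i: "i < n" and j: "j < n"
    have Ck: "C ^\<^sub>m k = (complex_of_real (1 / s)) ^ k \<cdot>\<^sub>m (B ^\<^sub>m k)"
      unfolding C_def by (rule smult_pow_mat[OF B])
    have "norm ((C ^\<^sub>m k) $$ (i, j)) \<le> c" using c[of k] i j C unfolding norm_bound_def by auto
    moreover have "(C ^\<^sub>m k) $$ (i, j) = (complex_of_real (1 / s)) ^ k * (B ^\<^sub>m k) $$ (i, j)"
      unfolding Ck using i j B by simp
    moreover have "cmod (1 / complex_of_real s) = 1 / s" using s0 by (simp add: norm_divide)
    ultimately have "(1 / s) ^ k * norm ((B ^\<^sub>m k) $$ (i, j)) \<le> c"
      using s0 by (simp add: norm_mult norm_power)
    then have "(1 / s) ^ k * norm ((B ^\<^sub>m k) $$ (i, j)) * s ^ k \<le> c * s ^ k"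
      using s0 by (intro mult_right_mono) auto
    moreover have "(1 / s) ^ k * norm ((B ^\<^sub>m k) $$ (i, j)) * s ^ k = norm ((B ^\<^sub>m k) $$ (i, j))"
      using s0 by (simp add: power_one_over field_simps)
    ultimately show "norm ((B ^\<^sub>m k) $$ (i, j)) \<le> c * s ^ k" by simp
  qed
  then show ?thesis using s0 s1 by blast
qed

lemma pow_nonneg:
  assumes A: "(A :: real mat) \<in> carrier_mat n n" and nn: "\<And>i j. i < n \<Longrightarrow> j < n \<Longrightarrow> A $$ (i, j) \<ge> 0"
  shows "i < n \<Longrightarrow> j < n \<Longrightarrow> (A ^\<^sub>m k) $$ (i, j) \<ge> 0"
proof (induction k arbitrary: i j)
  case 0 then show ?case using A by simp
next
  case (Suc k)
  have "(A ^\<^sub>m Suc k) $$ (i, j) = (\<Sum>l = 0..<n. (A ^\<^sub>m k) $$ (i, l) * A $$ (l, j))"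
    using A Suc.prems by (simp add: scalar_prod_def)
  also have "\<dots> \<ge> 0" using Suc nn by (intro sum_nonneg mult_nonneg_nonneg) auto
  finally show ?case .
qed

lemma pos_vec:
  assumes R: "R \<in> carrier_mat n n" and sym: "\<forall>i<n. \<forall>j<n. R $$ (i, j) = R $$ (j, i)"
    and sr: "spectral_radius (map_mat (\<lambda>x. complex_of_real \<bar>x\<bar>) R) < 1"
  shows "\<exists>x. (\<forall>i<n. x i > 0) \<and> (\<forall>i<n. (\<Sum>j = 0..<n. \<bar>R $$ (i, j)\<bar> * x j) \<le> x i - 1 / 2)"
proof (cases "n = 0")
  case True then show ?thesis by auto
next
  case False
  then have n: "n > 0" by simp
  define A where "A = map_mat abs R"
  have A: "A \<in> carrier_mat n n" using R unfolding A_def by simp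
  define B where "B = map_mat (\<lambda>x. complex_of_real \<bar>x\<bar>) R"
  have B: "B \<in> carrier_mat n n" using R unfolding B_def by simp
  have BA: "B = map_mat complex_of_real A" unfolding A_def B_def by (intro eq_matI) auto
  have Aij: "\<And>i j. i < n \<Longrightarrow> j < n \<Longrightarrow> A $$ (i, j) = \<bar>R $$ (i, j)\<bar>" using R unfolding A_def by simp
  have Asym: "\<And>i j. i < n \<Longrightarrow> j < n \<Longrightarrow> A $$ (i, j) = A $$ (j, i)" using Aij sym by simp
  have Ann: "\<And>k i j. i < n \<Longrightarrow> j < n \<Longrightarrow> (A ^\<^sub>m k) $$ (i, j) \<ge> 0"
    by (rule pow_nonneg[OF A]) (use Aij in auto)
  obtain s c where s0: "0 < s" and s1: "s < 1"
    and bd: "\<And>k i j. i < n \<Longrightarrow> j < n \<Longrightarrow> norm ((B ^\<^sub>m k) $$ (i, j)) \<le> c * s ^ k"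
    using power_decay[OF B n sr[folded B_def]] by blast
  have Abd: "(A ^\<^sub>m k) $$ (i, j) \<le> c * s ^ k" if "i < n" "j < n" for k i j
  proof -
    have "B ^\<^sub>m k = map_mat complex_of_real (A ^\<^sub>m k)"
      unfolding BA using of_real_hom.mat_hom_pow[OF A, of k] by metis
    then have "(B ^\<^sub>m k) $$ (i, j) = complex_of_real ((A ^\<^sub>m k) $$ (i, j))" using that A by simp
    then have "norm ((B ^\<^sub>m k) $$ (i, j)) = (A ^\<^sub>m k) $$ (i, j)" using Ann[OF that, of k] by simp
    then show ?thesis using bd[OF that, of k] by simp
  qed
  have "(\<lambda>k. c * s ^ k) \<longlonglongrightarrow> c * 0"
    by (intro tendsto_mult tendsto_const LIMSEQ_power_zero) (use s0 s1 in auto)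
  then have "eventually (\<lambda>k. c * s ^ k < 1 / (2 * real n)) sequentially"
    using n by (intro order_tendstoD(2)) auto
  then obtain N0 where N0: "\<And>k. k \<ge> N0 \<Longrightarrow> c * s ^ k < 1 / (2 * real n)"
    unfolding eventually_sequentially by blast
  define N where "N = Suc N0"
  define y where "y k i = (\<Sum>l = 0..<n. (A ^\<^sub>m k) $$ (l, i))" for k i
  define x where "x i = (\<Sum>k<N. y k i)" for i
  have y0: "y 0 i = 1" if "i < n" for i
  proof -
    have "y 0 i = (\<Sum>l = 0..<n. if l = i then 1 else 0)" unfolding y_def using that A by (intro sum.cong) auto
    then show ?thesis using that by simp
  qed
  have ynn: "y k i \<ge> 0" if "i < n" for k i unfolding y_def using Ann that by (intro sum_nonneg) auto
  have yN: "y N i \<le> 1 / 2" if "i < n" for i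
  proof -
    have "y N i \<le> (\<Sum>l = 0..<n. 1 / (2 * real n))"
      unfolding y_def
    proof (rule sum_mono)
      fix l assume "l \<in> {0..<n}"
      then have "(A ^\<^sub>m N) $$ (l, i) \<le> c * s ^ N" using Abd that by auto
      also have "\<dots> < 1 / (2 * real n)" using N0[of N] unfolding N_def by simp
      finally show "(A ^\<^sub>m N) $$ (l, i) \<le> 1 / (2 * real n)" by simp
    qed
    also have "\<dots> = 1 / 2" using n by simp
    finally show ?thesis .
  qed
  have ystep: "(\<Sum>j = 0..<n. A $$ (i, j) * y k j) = y (Suc k) i" if i: "i < n" for i k
  proof -
    have "(\<Sum>j = 0..<n. A $$ (i, j) * y k j) = (\<Sum>j = 0..<n. \<Sum>l = 0..<n. (A ^\<^sub>m k) $$ (l, j) * A $$ (j, i))"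
      unfolding y_def using Asym i by (auto simp: sum_distrib_left ac_simps intro!: sum.cong)
    also have "\<dots> = (\<Sum>l = 0..<n. \<Sum>j = 0..<n. (A ^\<^sub>m k) $$ (l, j) * A $$ (j, i))" by (rule sum.swap)
    also have "\<dots> = y (Suc k) i"
      unfolding y_def using A i by (intro sum.cong) (auto simp: scalar_prod_def)
    finally show ?thesis .
  qed
  show ?thesis
  proof (intro exI conjI allI impI)
    fix i assume i: "i < n"
    have "x i \<ge> y 0 i" unfolding x_def N_def using ynn[OF i]
      by (intro member_le_sum) auto
    then show "x i > 0" using y0 i by simp
  next
    fix i assume i: "i < n"
    have "(\<Sum>j = 0..<n. \<bar>R $$ (i, j)\<bar> * x j) = (\<Sum>j = 0..<n. A $$ (i, j) * x j)"
      using Aij i by simp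
    also have "\<dots> = (\<Sum>k<N. \<Sum>j = 0..<n. A $$ (i, j) * y k j)"
      unfolding x_def by (simp add: sum_distrib_left sum.swap[of _ "{..<N}"])
    also have "\<dots> = (\<Sum>k<N. y (Suc k) i)" using ystep i by simp
    also have "\<dots> = (\<Sum>k<Suc N. y k i) - y 0 i" by (simp only: sum.lessThan_Suc_shift)
    also have "\<dots> = x i + y N i - 1" unfolding x_def using y0 i by simp
    also have "\<dots> \<le> x i - 1 / 2" using yN[OF i] by simp
    finally show "(\<Sum>j = 0..<n. \<bar>R $$ (i, j)\<bar> * x j) \<le> x i - 1 / 2" .
  qed
qed



lemma map_perm_apply:
  assumes "inj_on f A" "a \<in> A"
  shows "map_permutation A f p (f a) = f (p a)"
  using assms by (simp add: map_permutation_def restrict_id_def)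

lemma det_on_reindex:
  fixes g :: "nat \<Rightarrow> 'a"
  assumes bij: "bij_betw g {0..<k} S"
  shows "det_on S M = det (mat k k (\<lambda>(a, b). M (g a) (g b)))"
proof -
  let ?A = "{0..<k}"
  have inj: "inj_on g ?A" using bij by (auto simp: bij_betw_def)
  have finA: "finite ?A" by simp
  define \<phi> where "\<phi> = (\<lambda>p. map_permutation ?A g p)"
  let ?g' = "inv_into ?A g"
  have bij': "bij_betw ?g' S ?A" using bij by (rule bij_betw_inv_into)
  have phibij: "bij_betw \<phi> {p. p permutes ?A} {q. q permutes S}"
  proof (rule bij_betw_byWitness[where f' = "\<lambda>q. map_permutation S ?g' q"])
    show "\<forall>p\<in>{p. p permutes ?A}. map_permutation S ?g' (\<phi> p) = p"
    proof
      fix p assume p: "p \<in> {p. p permutes ?A}"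
      show "map_permutation S ?g' (\<phi> p) = p" unfolding \<phi>_def
        by (rule map_permutation_compose_inv[OF bij]) (use p inj in auto)
    qed
    show "\<forall>q\<in>{q. q permutes S}. \<phi> (map_permutation S ?g' q) = q"
    proof
      fix q assume q: "q \<in> {q. q permutes S}"
      show "\<phi> (map_permutation S ?g' q) = q" unfolding \<phi>_def
        by (rule map_permutation_compose_inv[OF bij']) (use q bij in \<open>auto simp: bij_betw_inv_into_right\<close>)
    qed
    show "\<phi> ` {p. p permutes ?A} \<subseteq> {q. q permutes S}"
      unfolding \<phi>_def using map_permutation_permutes[OF bij] by auto
    show "(\<lambda>q. map_permutation S ?g' q) ` {q. q permutes S} \<subseteq> {p. p permutes ?A}"
      using map_permutation_permutes[OF bij'] by auto
  qed
  have "det_on S M = (\<Sum>q\<in>{q. q permutes S}. of_int (sign q) * (\<Prod>x\<in>S. M x (q x)))"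
    unfolding det_on_def by simp
  also have "\<dots> = (\<Sum>p\<in>{p. p permutes ?A}. of_int (sign (\<phi> p)) * (\<Prod>x\<in>S. M x (\<phi> p x)))"
    using sum.reindex_bij_betw[OF phibij, of "\<lambda>q. of_int (sign q) * (\<Prod>x\<in>S. M x (q x))"] by simp
  also have "\<dots> = (\<Sum>p\<in>{p. p permutes ?A}. of_int (sign p) * (\<Prod>i\<in>?A. M (g i) (g (p i))))"
  proof (rule sum.cong)
    fix p assume p: "p \<in> {p. p permutes ?A}"
    have s: "sign (\<phi> p) = sign p" unfolding \<phi>_def
      by (rule sign_map_permutation) (use inj p in auto)
    have "(\<Prod>x\<in>S. M x (\<phi> p x)) = (\<Prod>i\<in>?A. M (g i) (\<phi> p (g i)))"
      using prod.reindex_bij_betw[OF bij, of "\<lambda>x. M x (\<phi> p x)"] by simp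
    also have "\<dots> = (\<Prod>i\<in>?A. M (g i) (g (p i)))"
      by (rule prod.cong) (use inj in \<open>auto simp: \<phi>_def map_perm_apply\<close>)
    finally show "of_int (sign (\<phi> p)) * (\<Prod>x\<in>S. M x (\<phi> p x)) = of_int (sign p) * (\<Prod>i\<in>?A. M (g i) (g (p i)))"
      using s by simp
  qed simp
  also have "\<dots> = det (mat k k (\<lambda>(a, b). M (g a) (g b)))"
  proof -
    have c: "mat k k (\<lambda>(a, b). M (g a) (g b)) \<in> carrier_mat k k" by simp
    show ?thesis unfolding det_def'[OF c]
    proof (rule sum.cong)
      fix p assume p: "p \<in> {p. p permutes ?A}"
      have "\<And>i. i \<in> ?A \<Longrightarrow> p i \<in> ?A" using p permutes_in_image by auto
      then show "of_int (sign p) * (\<Prod>i\<in>?A. M (g i) (g (p i))) =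
        signof p * (\<Prod>i = 0..<k. mat k k (\<lambda>(a, b). M (g a) (g b)) $$ (i, p i))"
        by (simp add: sign_def)
    qed simp
  qed
  finally show ?thesis .
qed



context
  fixes n :: nat and R :: "real mat" and x :: "nat \<Rightarrow> real"
  assumes carrier: "R \<in> carrier_mat n n"
    and sym: "\<forall>i<n. \<forall>j<n. R $$ (i, j) = R $$ (j, i)"
    and xpos: "\<forall>i<n. x i > 0"
    and xsum: "\<forall>i<n. (\<Sum>j = 0..<n. \<bar>R $$ (i, j)\<bar> * x j) \<le> x i - 1 / 2"
begin

lemma xnn: "i < n \<Longrightarrow> x i \<ge> 0" using xpos less_imp_le by auto

lemma nbrs_sub: "nbrs n R i \<subseteq> {0..<n}" by (auto simp: nbrs_def)

lemma fin_nbrs: "finite (nbrs n R i)" using nbrs_sub finite_subset by blast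

lemma sum_bound_excl:
  assumes a: "\<And>k. k < n \<Longrightarrow> 0 \<le> a k \<and> a k \<le> \<bar>R $$ (k, i)\<bar> * x k / x i"
    and i: "i < n" and j: "j < n"
  shows "(\<Sum>k\<in>nbrs n R i - {j}. a k) \<le> (x i - 1 / 2 - \<bar>R $$ (i, j)\<bar> * x j) / x i"
proof -
  have xi: "x i > 0" using xpos i by auto
  have "(\<Sum>k\<in>nbrs n R i - {j}. a k) \<le> (\<Sum>k\<in>nbrs n R i - {j}. \<bar>R $$ (i, k)\<bar> * x k / x i)"
  proof (rule sum_mono)
    fix k assume "k \<in> nbrs n R i - {j}"
    then have k: "k < n" by (auto simp: nbrs_def)
    then show "a k \<le> \<bar>R $$ (i, k)\<bar> * x k / x i" using a[OF k] sym i by auto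
  qed
  also have "\<dots> = (\<Sum>k\<in>nbrs n R i - {j}. \<bar>R $$ (i, k)\<bar> * x k) / x i"
    by (simp add: sum_divide_distrib)
  also have "(\<Sum>k\<in>nbrs n R i - {j}. \<bar>R $$ (i, k)\<bar> * x k) \<le> (\<Sum>k = 0..<n. \<bar>R $$ (i, k)\<bar> * x k) - \<bar>R $$ (i, j)\<bar> * x j"
  proof -
    have "(\<Sum>k\<in>insert j (nbrs n R i - {j}). \<bar>R $$ (i, k)\<bar> * x k) \<le> (\<Sum>k = 0..<n. \<bar>R $$ (i, k)\<bar> * x k)"
      using nbrs_sub j xnn by (intro sum_mono2) (auto intro!: mult_nonneg_nonneg)
    moreover have "(\<Sum>k\<in>insert j (nbrs n R i - {j}). \<bar>R $$ (i, k)\<bar> * x k) =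
        \<bar>R $$ (i, j)\<bar> * x j + (\<Sum>k\<in>nbrs n R i - {j}. \<bar>R $$ (i, k)\<bar> * x k)"
      using fin_nbrs[of i] by (simp add: sum.insert_remove)
    ultimately show ?thesis by simp
  qed
  then have "(\<Sum>k\<in>nbrs n R i - {j}. \<bar>R $$ (i, k)\<bar> * x k) / x i \<le> (x i - 1 / 2 - \<bar>R $$ (i, j)\<bar> * x j) / x i"
    using xsum i xi by (intro divide_right_mono) auto
  finally show ?thesis by simp
qed

lemma sum_bound_full:
  assumes a: "\<And>k. k < n \<Longrightarrow> 0 \<le> a k \<and> a k \<le> \<bar>R $$ (k, i)\<bar> * x k / x i"
    and i: "i < n"
  shows "(\<Sum>k\<in>nbrs n R i. a k) \<le> (x i - 1 / 2) / x i"
proof -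
  have xi: "x i > 0" using xpos i by auto
  have "(\<Sum>k\<in>nbrs n R i. a k) \<le> (\<Sum>k\<in>nbrs n R i. \<bar>R $$ (i, k)\<bar> * x k / x i)"
  proof (rule sum_mono)
    fix k assume "k \<in> nbrs n R i"
    then have k: "k < n" by (auto simp: nbrs_def)
    then show "a k \<le> \<bar>R $$ (i, k)\<bar> * x k / x i" using a[OF k] sym i by auto
  qed
  also have "\<dots> = (\<Sum>k\<in>nbrs n R i. \<bar>R $$ (i, k)\<bar> * x k) / x i"
    by (simp add: sum_divide_distrib)
  also have "(\<Sum>k\<in>nbrs n R i. \<bar>R $$ (i, k)\<bar> * x k) \<le> (\<Sum>k = 0..<n. \<bar>R $$ (i, k)\<bar> * x k)"
    using nbrs_sub xnn by (intro sum_mono2) (auto intro!: mult_nonneg_nonneg)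
  then have "(\<Sum>k\<in>nbrs n R i. \<bar>R $$ (i, k)\<bar> * x k) / x i \<le> (x i - 1 / 2) / x i"
    using xsum i xi by (intro divide_right_mono) auto
  finally show ?thesis by simp
qed

lemma denom_pos:
  assumes a: "\<And>k. k < n \<Longrightarrow> 0 \<le> a k \<and> a k \<le> \<bar>R $$ (k, i)\<bar> * x k / x i"
    and i: "i < n" and j: "j < n"
  shows "1 - (\<Sum>k\<in>nbrs n R i - {j}. a k) \<ge> (1 / 2 + \<bar>R $$ (i, j)\<bar> * x j) / x i"
proof -
  have xi: "x i > 0" using xpos i by auto
  have "(x i - 1 / 2 - \<bar>R $$ (i, j)\<bar> * x j) / x i = 1 - (1 / 2 + \<bar>R $$ (i, j)\<bar> * x j) / x i"
    using xi by (simp add: field_simps)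
  then show ?thesis using sum_bound_excl[OF a i j] by linarith
qed

lemma step_bound:
  assumes i: "i < n" and j: "j < n" and D: "D \<ge> (1 / 2 + \<bar>r\<bar> * x j) / x i"
  shows "0 \<le> r\<^sup>2 / D \<and> r\<^sup>2 / D \<le> \<bar>r\<bar> * x i / x j"
proof -
  have xi: "x i > 0" and xj: "x j > 0" using xpos i j by auto
  have D0: "D > 0" using D xi xj
    by (smt (verit) divide_pos_pos mult_nonneg_nonneg abs_ge_zero)
  have xD: "x i * D \<ge> 1 / 2 + \<bar>r\<bar> * x j" using D xi by (simp add: field_simps)
  have "\<bar>r\<bar> * (x i * D) \<ge> \<bar>r\<bar> * (1 / 2 + \<bar>r\<bar> * x j)" using xD by (intro mult_left_mono) auto
  then have "r\<^sup>2 * x j \<le> \<bar>r\<bar> * x i * D"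
    by (simp add: power2_eq_square algebra_simps)
  then have "r\<^sup>2 / D \<le> \<bar>r\<bar> * x i / x j" using D0 xj by (simp add: field_simps)
  then show ?thesis using D0 by simp
qed

lemma iter_bound:
  "\<forall>i<n. \<forall>j<n. 0 \<le> alpha_iter n R t i j \<and> alpha_iter n R t i j \<le> \<bar>R $$ (i, j)\<bar> * x i / x j"
proof (induction t)
  case 0 then show ?case using xnn xpos by (auto intro!: divide_nonneg_pos mult_nonneg_nonneg)
next
  case (Suc t)
  show ?case
  proof (intro allI impI)
    fix i j assume i: "i < n" and j: "j < n"
    have "1 - (\<Sum>k\<in>nbrs n R i - {j}. alpha_iter n R t k i) \<ge> (1 / 2 + \<bar>R $$ (i, j)\<bar> * x j) / x i"
      by (rule denom_pos[OF _ i j]) (use Suc i in auto)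
    from step_bound[OF i j this]
    show "0 \<le> alpha_iter n R (Suc t) i j \<and> alpha_iter n R (Suc t) i j \<le> \<bar>R $$ (i, j)\<bar> * x i / x j"
      by simp
  qed
qed

lemma iter_denom_pos:
  assumes i: "i < n" and j: "j < n"
  shows "1 - (\<Sum>k\<in>nbrs n R i - {j}. alpha_iter n R t k i) > 0"
proof -
  have xi: "x i > 0" and xj: "x j > 0" using xpos i j by auto
  have "1 - (\<Sum>k\<in>nbrs n R i - {j}. alpha_iter n R t k i) \<ge> (1 / 2 + \<bar>R $$ (i, j)\<bar> * x j) / x i"
    by (rule denom_pos[OF _ i j]) (use iter_bound i in auto)
  moreover have "(1 / 2 + \<bar>R $$ (i, j)\<bar> * x j) / x i > 0" using xi xj
    by (intro divide_pos_pos) (auto intro: add_pos_nonneg)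
  ultimately show ?thesis by linarith
qed

lemma iter_mono:
  "\<forall>i<n. \<forall>j<n. alpha_iter n R t i j \<le> alpha_iter n R (Suc t) i j"
proof (induction t)
  case 0 then show ?case using iter_bound[of 1] by auto
next
  case (Suc t)
  show ?case
  proof (intro allI impI)
    fix i j assume i: "i < n" and j: "j < n"
    have S: "(\<Sum>k\<in>nbrs n R i - {j}. alpha_iter n R t k i) \<le> (\<Sum>k\<in>nbrs n R i - {j}. alpha_iter n R (Suc t) k i)"
      by (rule sum_mono) (use Suc i in \<open>auto simp: nbrs_def\<close>)
    have p1: "1 - (\<Sum>k\<in>nbrs n R i - {j}. alpha_iter n R (Suc t) k i) > 0" by (rule iter_denom_pos[OF i j])
    have "(R $$ (i, j))\<^sup>2 / (1 - (\<Sum>k\<in>nbrs n R i - {j}. alpha_iter n R t k i))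
      \<le> (R $$ (i, j))\<^sup>2 / (1 - (\<Sum>k\<in>nbrs n R i - {j}. alpha_iter n R (Suc t) k i))"
      using S p1 by (intro divide_left_mono) auto
    then show "alpha_iter n R (Suc t) i j \<le> alpha_iter n R (Suc (Suc t)) i j" by simp
  qed
qed

lemma alpha_lim:
  assumes i: "i < n" and j: "j < n"
  shows "(\<lambda>t. alpha_iter n R t i j) \<longlonglongrightarrow> alpha n R i j"
proof -
  have inc: "incseq (\<lambda>t. alpha_iter n R t i j)"
    using iter_mono i j by (intro incseq_SucI) auto
  have bd: "\<forall>t. alpha_iter n R t i j \<le> \<bar>R $$ (i, j)\<bar> * x i / x j" using iter_bound i j by blast
  obtain L where L: "(\<lambda>t. alpha_iter n R t i j) \<longlonglongrightarrow> L"
    by (rule incseq_convergent[OF inc bd])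
  have "alpha n R i j = L" unfolding alpha_def by (rule limI[OF L])
  then show ?thesis using L by simp
qed

lemma alpha_bound:
  assumes i: "i < n" and j: "j < n"
  shows "0 \<le> alpha n R i j \<and> alpha n R i j \<le> \<bar>R $$ (i, j)\<bar> * x i / x j"
proof
  show "0 \<le> alpha n R i j"
    by (rule LIMSEQ_le_const[OF alpha_lim[OF i j]]) (use iter_bound i j in auto)
  show "alpha n R i j \<le> \<bar>R $$ (i, j)\<bar> * x i / x j"
    by (rule LIMSEQ_le_const2[OF alpha_lim[OF i j]]) (use iter_bound i j in auto)
qed

lemma alpha_denom_pos:
  assumes i: "i < n" and j: "j < n"
  shows "1 - (\<Sum>k\<in>nbrs n R i - {j}. alpha n R k i) > 0"
proof -
  have xi: "x i > 0" and xj: "x j > 0" using xpos i j by auto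
  have "1 - (\<Sum>k\<in>nbrs n R i - {j}. alpha n R k i) \<ge> (1 / 2 + \<bar>R $$ (i, j)\<bar> * x j) / x i"
    by (rule denom_pos[OF _ i j]) (use alpha_bound i in auto)
  moreover have "(1 / 2 + \<bar>R $$ (i, j)\<bar> * x j) / x i > 0" using xi xj
    by (intro divide_pos_pos) (auto intro: add_pos_nonneg)
  ultimately show ?thesis by linarith
qed

lemma alpha_full_pos:
  assumes i: "i < n"
  shows "1 - (\<Sum>k\<in>nbrs n R i. alpha n R k i) > 0"
proof -
  have xi: "x i > 0" using xpos i by auto
  have "(\<Sum>k\<in>nbrs n R i. alpha n R k i) \<le> (x i - 1 / 2) / x i"
    by (rule sum_bound_full[OF _ i]) (use alpha_bound i in auto)
  moreover have "(x i - 1 / 2) / x i < 1" using xi by (simp add: field_simps)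
  ultimately show ?thesis by linarith
qed

lemma alpha_fix:
  assumes i: "i < n" and j: "j < n"
  shows "alpha n R i j = (R $$ (i, j))\<^sup>2 / (1 - (\<Sum>k\<in>nbrs n R i - {j}. alpha n R k i))"
proof -
  have l1: "(\<lambda>t. alpha_iter n R (Suc t) i j) \<longlonglongrightarrow> alpha n R i j"
    using alpha_lim[OF i j] by (rule LIMSEQ_Suc)
  have "(\<lambda>t. (R $$ (i, j))\<^sup>2 / (1 - (\<Sum>k\<in>nbrs n R i - {j}. alpha_iter n R t k i)))
     \<longlonglongrightarrow> (R $$ (i, j))\<^sup>2 / (1 - (\<Sum>k\<in>nbrs n R i - {j}. alpha n R k i))"
  proof (intro tendsto_divide tendsto_const tendsto_diff tendsto_sum)
    fix k assume "k \<in> nbrs n R i - {j}"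
    then have k: "k < n" by (auto simp: nbrs_def)
    show "(\<lambda>t. alpha_iter n R t k i) \<longlonglongrightarrow> alpha n R k i" by (rule alpha_lim[OF k i])
  next
    show "1 - (\<Sum>k\<in>nbrs n R i - {j}. alpha n R k i) \<noteq> 0" using alpha_denom_pos[OF i j] by simp
  qed
  then have l2: "(\<lambda>t. alpha_iter n R (Suc t) i j) \<longlonglongrightarrow> (R $$ (i, j))\<^sup>2 / (1 - (\<Sum>k\<in>nbrs n R i - {j}. alpha n R k i))"
    by simp
  show ?thesis using LIMSEQ_unique[OF l1 l2] .
qed

end


lemma sum_two_pts:
  assumes "finite S" "a \<in> S" "b \<in> S" "a \<noteq> b" "\<And>c. c \<in> S \<Longrightarrow> c \<noteq> a \<Longrightarrow> c \<noteq> b \<Longrightarrow> f c = 0"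
  shows "sum f S = f a + f b"
proof -
  have "sum f S = sum f {a, b}"
    using assms by (intro sum.mono_neutral_right) auto
  then show ?thesis using assms by simp
qed

lemma sum_one_pt:
  assumes "finite S" "a \<in> S" "\<And>c. c \<in> S \<Longrightarrow> c \<noteq> a \<Longrightarrow> f c = 0"
  shows "sum f S = f a"
proof -
  have "sum f S = sum f {a}"
    using assms by (intro sum.mono_neutral_right) auto
  then show ?thesis by simp
qed

lemma mat_mult_index:
  assumes "i < nr" "j < nc"
  shows "(mat nr k f * mat k nc h) $$ (i, j) = (\<Sum>c = 0..<k. f (i, c) * h (c, j))"
  using assms by (simp add: scalar_prod_def)

lemma prod_list_map_upt0: fixes k :: nat shows "prod_list (map f [0..<k]) = (\<Prod>i = 0..<k. f i)"
  by (induction k) auto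

lemma det_diag_prod:
  assumes "A \<in> carrier_mat k k" "\<And>i j. i < k \<Longrightarrow> j < k \<Longrightarrow> i \<noteq> j \<Longrightarrow> A $$ (i, j) = 0"
  shows "det A = (\<Prod>i = 0..<k. A $$ (i, i))"
proof -
  have "upper_triangular A" using assms by (auto simp: upper_triangular_def)
  then have "det A = prod_list (diag_mat A)" using det_upper_triangular assms(1) by blast
  then show ?thesis using assms(1) by (simp add: diag_mat_def prod_list_map_upt0)
qed

lemma prod_pairs: fixes k :: nat shows "(\<Prod>a = 0..<2 * k. f a) = (\<Prod>j = 0..<k. f (2 * j) * (f (2 * j + 1) :: 'a :: comm_monoid_mult))"
proof (induction k)
  case 0 then show ?case by simp
next
  case (Suc k)
  have "{0..<2 * Suc k} = insert (2 * k + 1) (insert (2 * k) {0..<2 * k})" by auto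
  then have "(\<Prod>a = 0..<2 * Suc k. f a) = f (2 * k + 1) * (f (2 * k) * (\<Prod>a = 0..<2 * k. f a))"
    by simp
  then show ?case using Suc by (simp add: ac_simps)
qed

lemma mat_minus_add_cancel: "(A :: 'a :: ab_group_add mat) \<in> carrier_mat k l \<Longrightarrow> B \<in> carrier_mat k l \<Longrightarrow> A - B + B = A"
  by (intro eq_matI) auto

lemma mat_add_one_minus: "(K :: 'a :: ring_1 mat) \<in> carrier_mat k k \<Longrightarrow> K + (1\<^sub>m k - K) * 1\<^sub>m k = 1\<^sub>m k"
proof -
  assume K: "K \<in> carrier_mat k k"
  then have "(1\<^sub>m k - K) * 1\<^sub>m k = 1\<^sub>m k - K" by (intro right_mult_one_mat) auto
  then show ?thesis using K by (simp, intro eq_matI) auto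
qed

locale ihara =
  fixes n :: nat and R :: "real mat" and \<beta> :: "nat \<Rightarrow> nat \<Rightarrow> real" and D :: "nat \<Rightarrow> real"
    and q :: nat and P :: "nat \<Rightarrow> nat \<times> nat"
  assumes carrier: "R \<in> carrier_mat n n"
    and sym: "\<And>i j. i < n \<Longrightarrow> j < n \<Longrightarrow> R $$ (i, j) = R $$ (j, i)"
    and diag0: "\<And>i. i < n \<Longrightarrow> R $$ (i, i) = 0"
    and Dpos: "\<And>v. v < n \<Longrightarrow> D v > 0"
    and bpos: "\<And>i j. (i, j) \<in> dir_edges n R \<Longrightarrow> \<beta> i j > 0"
    and key: "\<And>i j. (i, j) \<in> dir_edges n R \<Longrightarrow> \<beta> i j * \<beta> j i - (R $$ (i, j))\<^sup>2 = D i * \<beta> j i"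
    and diagsum: "\<And>v. v < n \<Longrightarrow> (\<Sum>k\<in>nbrs n R v. (R $$ (v, k))\<^sup>2 / \<beta> k v) = 1 - D v"
    and Pbij: "bij_betw P {..<q} (undir_edges n R)"
begin

abbreviation "E \<equiv> dir_edges n R"
abbreviation "U \<equiv> undir_edges n R"

definition g :: "nat \<Rightarrow> nat \<times> nat" where
  "g a = (if even a then P (a div 2) else prod.swap (P (a div 2)))"

definition pt :: "nat \<Rightarrow> nat" where
  "pt a = (if even a then Suc a else a - 1)"

abbreviation "m \<equiv> 2 * q"

lemma E_swap: "e \<in> E \<Longrightarrow> prod.swap e \<in> E"
  using sym by (auto simp: dir_edges_def)

lemma E_neq: "e \<in> E \<Longrightarrow> fst e \<noteq> snd e"
proof
  assume "e \<in> E" "fst e = snd e"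
  then show False using diag0[of "fst e"] by (cases e) (auto simp: dir_edges_def)
qed

lemma E_lt: "e \<in> E \<Longrightarrow> fst e < n \<and> snd e < n"
  by (auto simp: dir_edges_def)

lemma U_sub: "U \<subseteq> E" by (auto simp: dir_edges_def undir_edges_def)

lemma U_lt: "e \<in> U \<Longrightarrow> fst e < snd e" by (auto simp: undir_edges_def)

lemma P_in: "k < q \<Longrightarrow> P k \<in> U" using Pbij by (auto simp: bij_betw_def)

lemma g_in: "a < m \<Longrightarrow> g a \<in> E"
proof -
  assume a: "a < m"
  then have "a div 2 < q" by auto
  then have "P (a div 2) \<in> E" using P_in U_sub by auto
  then show ?thesis unfolding g_def using E_swap by auto
qed

lemma g_inj: "inj_on g {..<m}"
proof (rule inj_onI)
  fix a b assume a: "a \<in> {..<m}" and b: "b \<in> {..<m}" and eq: "g a = g b"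
  have ak: "a div 2 < q" and bk: "b div 2 < q" using a b by auto
  have injP: "inj_on P {..<q}" using Pbij by (auto simp: bij_betw_def)
  have la: "fst (P (a div 2)) < snd (P (a div 2))" using U_lt P_in ak by auto
  have lb: "fst (P (b div 2)) < snd (P (b div 2))" using U_lt P_in bk by auto
  show "a = b"
  proof (cases "even a")
    case True note ea = this
    show ?thesis
    proof (cases "even b")
      case True
      then have "P (a div 2) = P (b div 2)" using eq ea by (simp add: g_def)
      then have "a div 2 = b div 2" using injP ak bk by (auto simp: inj_on_def)
      then show ?thesis using ea True by (metis dvd_mult_div_cancel)
    next
      case False
      then have "P (a div 2) = prod.swap (P (b div 2))" using eq ea by (simp add: g_def)
      then have "fst (P (a div 2)) = snd (P (b div 2))" "snd (P (a div 2)) = fst (P (b div 2))"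
        by (auto simp: prod.swap_def)
      then show ?thesis using la lb by linarith
    qed
  next
    case False note oa = this
    show ?thesis
    proof (cases "even b")
      case True
      then have "prod.swap (P (a div 2)) = P (b div 2)" using eq oa by (simp add: g_def)
      then have "fst (P (b div 2)) = snd (P (a div 2))" "snd (P (b div 2)) = fst (P (a div 2))"
        by (metis fst_swap snd_swap)+
      then show ?thesis using la lb by linarith
    next
      case False
      then have "P (a div 2) = P (b div 2)" using eq oa by (simp add: g_def) (metis swap_swap)
      then have "a div 2 = b div 2" using injP ak bk by (auto simp: inj_on_def)
      then show ?thesis using oa False by (metis odd_two_times_div_two_succ)
    qed
  qed
qed

lemma g_surj: "e \<in> E \<Longrightarrow> \<exists>a<m. g a = e"
proof -
  assume e: "e \<in> E"
  obtain i j where ij: "e = (i, j)" by force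
  have "i \<noteq> j" using E_neq[OF e] ij by auto
  show ?thesis
  proof (cases "i < j")
    case True
    then have "(i, j) \<in> U" using e ij by (auto simp: dir_edges_def undir_edges_def)
    then obtain k where k: "k < q" "P k = (i, j)" using Pbij unfolding bij_betw_def by (metis imageE lessThan_iff)
    then show ?thesis using ij by (intro exI[of _ "2 * k"]) (auto simp: g_def)
  next
    case False
    then have "(j, i) \<in> U" using e ij \<open>i \<noteq> j\<close> sym
      by (auto simp: dir_edges_def undir_edges_def)
    then obtain k where k: "k < q" "P k = (j, i)" using Pbij unfolding bij_betw_def by (metis imageE lessThan_iff)
    then show ?thesis using ij by (intro exI[of _ "2 * k + 1"]) (auto simp: g_def)
  qed
qed

lemma g_bij: "bij_betw g {..<m} E"
  unfolding bij_betw_def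
proof
  show "inj_on g {..<m}" by (rule g_inj)
  show "g ` {..<m} = E"
  proof
    show "g ` {..<m} \<subseteq> E" using g_in by auto
    show "E \<subseteq> g ` {..<m}"
    proof
      fix e assume "e \<in> E"
      then obtain a where "a < m" "g a = e" using g_surj by blast
      then show "e \<in> g ` {..<m}" by auto
    qed
  qed
qed

lemma card_E: "card E = m"
  using bij_betw_same_card[OF g_bij] by simp

lemma pt_lt: "a < m \<Longrightarrow> pt a < m"
  by (auto simp: pt_def elim!: evenE)

lemma pt_neq: "pt a \<noteq> a" by (cases "even a") (auto simp: pt_def elim: oddE)

lemma pt_neq': "a \<noteq> pt a" using pt_neq by metis

lemma pt_pt: "pt (pt a) = a" by (cases "even a") (auto simp: pt_def elim: oddE)

lemma g_pt: "g (pt a) = prod.swap (g a)"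
proof (cases "even a")
  case True
  then show ?thesis by (auto simp: pt_def g_def)
next
  case False
  then obtain k where k: "a = 2 * k + 1" by (auto elim: oddE)
  then show ?thesis by (auto simp: pt_def g_def)
qed

lemma g_eq_iff: "a < m \<Longrightarrow> b < m \<Longrightarrow> g a = g b \<longleftrightarrow> a = b"
  using g_inj by (auto simp: inj_on_def)

definition u :: "nat \<times> nat \<Rightarrow> real" where
  "u e = R $$ e / \<beta> (fst e) (snd e)"

definition Dl :: "nat \<times> nat \<Rightarrow> real" where
  "Dl e = 1 - u e * u (prod.swap e)"

definition Rp :: "real mat" where
  "Rp = mat m m (\<lambda>(a, b). if snd (g a) = fst (g b) \<and> fst (g a) \<noteq> snd (g b) then u (g b) else 0)"

definition Am :: "real mat" where
  "Am = mat m m (\<lambda>(a, b). if a = b then 1 else if b = pt a then u (g b) else 0)"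

definition Tm :: "real mat" where
  "Tm = mat m n (\<lambda>(a, v). if snd (g a) = v then 1 else 0)"

definition Wm :: "real mat" where
  "Wm = mat n m (\<lambda>(v, b). if fst (g b) = v then u (g b) else 0)"

definition Ai :: "real mat" where
  "Ai = mat m m (\<lambda>(a, b). if a = b then 1 / Dl (g a) else if b = pt a then - u (g b) / Dl (g a) else 0)"

lemma TW_index:
  assumes a: "a < m" and b: "b < m"
  shows "(Tm * Wm) $$ (a, b) = (if snd (g a) = fst (g b) then u (g b) else 0)"
proof -
  have sa: "snd (g a) < n" using E_lt g_in a by auto
  have "(Tm * Wm) $$ (a, b) = (\<Sum>v = 0..<n. (if snd (g a) = v then 1 else 0) * (if fst (g b) = v then u (g b) else 0))"
    unfolding Tm_def Wm_def using a b by (subst mat_mult_index) auto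
  also have "\<dots> = (if snd (g a) = snd (g a) then 1 else 0) * (if fst (g b) = snd (g a) then u (g b) else 0)"
    by (rule sum_one_pt) (use sa in auto)
  finally show ?thesis by auto
qed

lemma claim1: "1\<^sub>m m - Rp = Am - Tm * Wm"
proof (rule eq_matI)
  show "dim_row (1\<^sub>m m - Rp) = dim_row (Am - Tm * Wm)" by (simp add: Rp_def Am_def Tm_def)
  show "dim_col (1\<^sub>m m - Rp) = dim_col (Am - Tm * Wm)" by (simp add: Rp_def Am_def Wm_def)
  fix a b assume "a < dim_row (Am - Tm * Wm)" "b < dim_col (Am - Tm * Wm)"
  then have a: "a < m" and b: "b < m" by (auto simp: Am_def Wm_def Tm_def)
  have ne: "fst (g a) \<noteq> snd (g a)" using E_neq g_in a by auto
  have TW: "(Tm * Wm) $$ (a, b) = (if snd (g a) = fst (g b) then u (g b) else 0)"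
    using TW_index a b .
  have lhs: "(1\<^sub>m m - Rp) $$ (a, b) = (if a = b then 1 else 0) -
     (if snd (g a) = fst (g b) \<and> fst (g a) \<noteq> snd (g b) then u (g b) else 0)"
    using a b by (simp add: Rp_def)
  have rhs: "(Am - Tm * Wm) $$ (a, b) = (if a = b then 1 else if b = pt a then u (g b) else 0) -
     (if snd (g a) = fst (g b) then u (g b) else 0)"
    using a b TW by (simp add: Am_def Tm_def Wm_def)
  show "(1\<^sub>m m - Rp) $$ (a, b) = (Am - Tm * Wm) $$ (a, b)"
    unfolding lhs rhs
  proof (cases "a = b")
    case True
    then show "(if a = b then 1 else 0) - (if snd (g a) = fst (g b) \<and> fst (g a) \<noteq> snd (g b) then u (g b) else 0) =
      (if a = b then 1 else if b = pt a then u (g b) else 0) - (if snd (g a) = fst (g b) then u (g b) else 0)"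
      using ne by auto
  next
    case False
    show "(if a = b then 1 else 0) - (if snd (g a) = fst (g b) \<and> fst (g a) \<noteq> snd (g b) then u (g b) else 0) =
      (if a = b then 1 else if b = pt a then u (g b) else 0) - (if snd (g a) = fst (g b) then u (g b) else 0)"
    proof (cases "b = pt a")
      case True
      then have "g b = prod.swap (g a)" using g_pt by simp
      then show ?thesis using False True by (cases "g a") auto
    next
      case nb: False
      have "\<not> (snd (g a) = fst (g b) \<and> fst (g a) = snd (g b))"
      proof
        assume "snd (g a) = fst (g b) \<and> fst (g a) = snd (g b)"
        then have "g b = g (pt a)" using g_pt by (cases "g a", cases "g b") auto
        then have "b = pt a" using g_eq_iff b pt_lt a by blast
        then show False using nb by simp
      qed
      then show ?thesis using False nb by auto
    qed
  qed
qed

lemma finite_E: "finite E"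
proof -
  have "E \<subseteq> {..<n} \<times> {..<n}" by (auto simp: dir_edges_def)
  then show ?thesis by (rule finite_subset) auto
qed

lemma E_iff: "i < n \<Longrightarrow> j < n \<Longrightarrow> (i, j) \<in> E \<longleftrightarrow> R $$ (i, j) \<noteq> 0"
  by (auto simp: dir_edges_def)

lemma Dl_val: assumes e: "(i, j) \<in> E" shows "Dl (i, j) = D i / \<beta> i j"
proof -
  have ij: "i < n" "j < n" using e by (auto simp: dir_edges_def)
  have ji: "(j, i) \<in> E" using E_swap[OF e] by simp
  have b1: "\<beta> i j > 0" and b2: "\<beta> j i > 0" using bpos e ji by auto
  have r: "R $$ (j, i) = R $$ (i, j)" using sym ij by auto
  have "Dl (i, j) = 1 - (R $$ (i, j))\<^sup>2 / (\<beta> i j * \<beta> j i)"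
    unfolding Dl_def u_def using r by (simp add: power2_eq_square)
  also have "\<dots> = (\<beta> i j * \<beta> j i - (R $$ (i, j))\<^sup>2) / (\<beta> i j * \<beta> j i)"
    using b1 b2 by (simp add: field_simps)
  also have "\<dots> = D i * \<beta> j i / (\<beta> i j * \<beta> j i)" using key[OF e] by simp
  also have "\<dots> = D i / \<beta> i j" using b2 by simp
  finally show ?thesis .
qed

lemma Dl_nz: assumes e: "e \<in> E" shows "Dl e \<noteq> 0"
proof -
  obtain i j where ij: "e = (i, j)" by force
  have "i < n" using e ij by (auto simp: dir_edges_def)
  then have "D i > 0" using Dpos by auto
  moreover have "\<beta> i j > 0" using bpos e ij by auto
  ultimately show ?thesis using Dl_val e ij by simp
qed

lemma Dl_swap: "Dl (prod.swap e) = Dl e"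
  unfolding Dl_def by simp

lemma A_Ai: "Am * Ai = 1\<^sub>m m"
proof (rule eq_matI)
  show "dim_row (Am * Ai) = dim_row (1\<^sub>m m)" by (simp add: Am_def)
  show "dim_col (Am * Ai) = dim_col (1\<^sub>m m)" by (simp add: Ai_def)
  fix a b assume "a < dim_row (1\<^sub>m m)" "b < dim_col (1\<^sub>m m)"
  then have a: "a < m" and b: "b < m" by auto
  have pa: "pt a < m" using pt_lt a .
  have gpa: "g (pt a) = prod.swap (g a)" by (rule g_pt)
  have dnz: "Dl (g a) \<noteq> 0" using Dl_nz g_in a by auto
  have "(Am * Ai) $$ (a, b) = (\<Sum>c = 0..<m. (if a = c then 1 else if c = pt a then u (g c) else 0) *
      (if c = b then 1 / Dl (g c) else if b = pt c then - u (g b) / Dl (g c) else 0))"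
    unfolding Am_def Ai_def using a b by (subst mat_mult_index) auto
  also have "\<dots> = (if a = b then 1 / Dl (g a) else if b = pt a then - u (g b) / Dl (g a) else 0)
     + u (g (pt a)) * (if pt a = b then 1 / Dl (g (pt a)) else if b = pt (pt a) then - u (g b) / Dl (g (pt a)) else 0)"
    by (subst sum_two_pts[where a = a and b = "pt a"]) (use a pa pt_neq pt_neq' in \<open>auto simp: pt_pt\<close>)
  also have "\<dots> = (if a = b then 1 else 0)"
  proof -
    have D2: "Dl (g (pt a)) = Dl (g a)" using gpa Dl_swap by simp
    show ?thesis
    proof (cases "a = b")
      case True
      then have "pt a \<noteq> b" using pt_neq by metis
      then show ?thesis using True D2 dnz gpa
        by (simp add: pt_pt Dl_def field_simps)
    next
      case False
      then show ?thesis using D2 dnz pt_pt[of a] by (auto simp: field_simps)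
    qed
  qed
  finally show "(Am * Ai) $$ (a, b) = 1\<^sub>m m $$ (a, b)" using a b by simp
qed

lemma AiT_index:
  assumes a: "a < m" and w: "w < n"
  shows "(Ai * Tm) $$ (a, w) = ((if snd (g a) = w then 1 else 0) - u (prod.swap (g a)) * (if fst (g a) = w then 1 else 0)) / Dl (g a)"
proof -
  have pa: "pt a < m" using pt_lt a .
  have gpa: "g (pt a) = prod.swap (g a)" by (rule g_pt)
  have "(Ai * Tm) $$ (a, w) = (\<Sum>c = 0..<m. (if a = c then 1 / Dl (g a) else if c = pt a then - u (g c) / Dl (g a) else 0) *
      (if snd (g c) = w then 1 else 0))"
    unfolding Ai_def Tm_def using a w by (subst mat_mult_index) auto
  also have "\<dots> = 1 / Dl (g a) * (if snd (g a) = w then 1 else 0) + (- u (g (pt a)) / Dl (g a)) * (if snd (g (pt a)) = w then 1 else 0)"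
    by (subst sum_two_pts[where a = a and b = "pt a"]) (use a pa pt_neq pt_neq' in \<open>auto simp: pt_pt\<close>)
  also have "\<dots> = ((if snd (g a) = w then 1 else 0) - u (prod.swap (g a)) * (if fst (g a) = w then 1 else 0)) / Dl (g a)"
    unfolding gpa by (auto simp: add_divide_distrib[symmetric] diff_divide_distrib[symmetric])
  finally show ?thesis .
qed

lemma sum_E_fst: assumes "v < n" shows
  "(\<Sum>e\<in>E. if fst e = v then F e else 0) = (\<Sum>k\<in>nbrs n R v. F (v, k))"
proof -
  have "(\<Sum>e\<in>E. if fst e = v then F e else 0) = (\<Sum>e\<in>{e\<in>E. fst e = v}. F e)"
    using finite_E by (simp add: sum.inter_filter)
  also have "{e\<in>E. fst e = v} = Pair v ` nbrs n R v"
    using assms by (auto simp: dir_edges_def nbrs_def)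
  also have "(\<Sum>e\<in>Pair v ` nbrs n R v. F e) = (\<Sum>k\<in>nbrs n R v. F (v, k))"
    by (subst sum.reindex) (auto simp: inj_on_def)
  finally show ?thesis .
qed

lemma sum_reindex_g: "(\<Sum>b = 0..<m. H (g b)) = (\<Sum>e\<in>E. H e)"
proof -
  have "(\<Sum>b\<in>{..<m}. H (g b)) = (\<Sum>e\<in>E. H e)"
    using sum.reindex_bij_betw[OF g_bij, of H] by simp
  then show ?thesis by (simp add: atLeast0LessThan)
qed

lemma nbrs_E: "v < n \<Longrightarrow> k \<in> nbrs n R v \<Longrightarrow> (v, k) \<in> E"
  by (auto simp: nbrs_def dir_edges_def)

lemma finite_nbrs: "finite (nbrs n R v)"
  by (rule finite_subset[of _ "{..<n}"]) (auto simp: nbrs_def)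

lemma K_index:
  assumes v: "v < n" and w: "w < n"
  shows "(Wm * (Ai * Tm)) $$ (v, w) = (if v = w then - (1 - D v) / D v else R $$ (v, w) / D v)"
proof -
  have Dv: "D v > 0" using Dpos v by auto
  have "(Wm * (Ai * Tm)) $$ (v, w) = (\<Sum>b = 0..<m. (if fst (g b) = v then u (g b) else 0) * (Ai * Tm) $$ (b, w))"
    using v w by (simp add: Wm_def Ai_def Tm_def scalar_prod_def)
  also have "\<dots> = (\<Sum>b = 0..<m. (if fst (g b) = v then u (g b) else 0) *
      (((if snd (g b) = w then 1 else 0) - u (prod.swap (g b)) * (if fst (g b) = w then 1 else 0)) / Dl (g b)))"
    by (rule sum.cong) (use AiT_index w in auto)
  also have "\<dots> = (\<Sum>e\<in>E. (if fst e = v then u e else 0) *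
      (((if snd e = w then 1 else 0) - u (prod.swap e) * (if fst e = w then 1 else 0)) / Dl e))"
    by (rule sum_reindex_g)
  also have "\<dots> = (\<Sum>e\<in>E. if fst e = v then u e *
      (((if snd e = w then 1 else 0) - u (prod.swap e) * (if fst e = w then 1 else 0)) / Dl e) else 0)"
    by (rule sum.cong) auto
  also have "\<dots> = (\<Sum>k\<in>nbrs n R v. u (v, k) *
      (((if k = w then 1 else 0) - u (k, v) * (if v = w then 1 else 0)) / Dl (v, k)))"
    using sum_E_fst[OF v, of "\<lambda>e. u e * (((if snd e = w then 1 else 0) - u (prod.swap e) * (if fst e = w then 1 else 0)) / Dl e)"]
    by simp
  also have "\<dots> = (if v = w then - (1 - D v) / D v else R $$ (v, w) / D v)"
  proof (cases "v = w")
    case True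
    have "(\<Sum>k\<in>nbrs n R v. u (v, k) *
      (((if k = w then 1 else 0) - u (k, v) * (if v = w then 1 else 0)) / Dl (v, k)))
      = (\<Sum>k\<in>nbrs n R v. - ((R $$ (v, k))\<^sup>2 / \<beta> k v) / D v)"
    proof (rule sum.cong)
      fix k assume k: "k \<in> nbrs n R v"
      have e: "(v, k) \<in> E" using nbrs_E v k .
      have kn: "k < n" and kv: "k \<noteq> v" using k diag0 v by (auto simp: nbrs_def)
      have b1: "\<beta> v k > 0" "\<beta> k v > 0" using bpos e E_swap[OF e] by auto
      have r: "R $$ (k, v) = R $$ (v, k)" using sym kn v by auto
      show "u (v, k) * (((if k = w then 1 else 0) - u (k, v) * (if v = w then 1 else 0)) / Dl (v, k))
        = - ((R $$ (v, k))\<^sup>2 / \<beta> k v) / D v"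
        using True kv Dl_val[OF e] b1 Dv r by (simp add: u_def field_simps power2_eq_square)
    qed simp
    also have "\<dots> = - (\<Sum>k\<in>nbrs n R v. (R $$ (v, k))\<^sup>2 / \<beta> k v) / D v"
      by (simp add: sum_divide_distrib sum_negf)
    also have "\<dots> = - (1 - D v) / D v" using diagsum v by simp
    finally show ?thesis using True by simp
  next
    case False
    have "(\<Sum>k\<in>nbrs n R v. u (v, k) *
      (((if k = w then 1 else 0) - u (k, v) * (if v = w then 1 else 0)) / Dl (v, k)))
      = (\<Sum>k\<in>nbrs n R v. if k = w then u (v, k) / Dl (v, k) else 0)"
      by (rule sum.cong) (use False in auto)
    also have "\<dots> = (if w \<in> nbrs n R v then u (v, w) / Dl (v, w) else 0)"
      using finite_nbrs by (simp add: sum.delta')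
    also have "\<dots> = R $$ (v, w) / D v"
    proof (cases "w \<in> nbrs n R v")
      case True
      have e: "(v, w) \<in> E" using nbrs_E v True .
      have "\<beta> v w > 0" using bpos e by auto
      then show ?thesis using True Dl_val[OF e] Dv by (simp add: u_def)
    next
      case nw: False
      then have "R $$ (v, w) = 0" using w by (auto simp: nbrs_def)
      then show ?thesis using nw by simp
    qed
    finally show ?thesis using False by simp
  qed
  finally show ?thesis .
qed

definition Lm :: "real mat" where
  "Lm = mat m m (\<lambda>(a, b). if a = b then 1 else if odd a \<and> b = a - 1 then u (g b) else 0)"

definition Um :: "real mat" where
  "Um = mat m m (\<lambda>(a, b). if a = b then (if odd a then Dl (g a) else 1)
     else if even a \<and> b = a + 1 then u (g b) else 0)"

lemma A_LU: "Am = Lm * Um"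
proof (rule eq_matI)
  show "dim_row Am = dim_row (Lm * Um)" by (simp add: Am_def Lm_def)
  show "dim_col Am = dim_col (Lm * Um)" by (simp add: Am_def Um_def)
  fix a b assume "a < dim_row (Lm * Um)" "b < dim_col (Lm * Um)"
  then have a: "a < m" and b: "b < m" by (auto simp: Lm_def Um_def)
  have LU: "(Lm * Um) $$ (a, b) = (\<Sum>c = 0..<m. (if a = c then 1 else if odd a \<and> c = a - 1 then u (g c) else 0) *
     (if c = b then (if odd c then Dl (g c) else 1) else if even c \<and> b = c + 1 then u (g b) else 0))"
    unfolding Lm_def Um_def using a b by (subst mat_mult_index) auto
  show "Am $$ (a, b) = (Lm * Um) $$ (a, b)"
  proof (cases "even a")
    case True
    have "(Lm * Um) $$ (a, b) = (if a = b then (if odd a then Dl (g a) else 1) else if even a \<and> b = a + 1 then u (g b) else 0)"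
      unfolding LU by (subst sum_one_pt[where a = a]) (use a True in auto)
    then show ?thesis using a b True by (cases "a = b") (auto simp: Am_def pt_def)
  next
    case False
    then obtain k where k: "a = 2 * k + 1" by (auto elim: oddE)
    have gp: "g (a - 1) = prod.swap (g a)" using g_pt[of a] False by (simp add: pt_def)
    have "(Lm * Um) $$ (a, b) = (if a = b then Dl (g a) else 0) + u (g (a - 1)) *
       (if a - 1 = b then 1 else if b = a then u (g b) else 0)"
      unfolding LU by (subst sum_two_pts[where a = a and b = "a - 1"]) (use a k in auto)
    also have "\<dots> = Am $$ (a, b)"
      using a b k gp by (auto simp: Am_def pt_def Dl_def)
    finally show ?thesis by simp
  qed
qed

lemma det_Am: "det Am = (\<Prod>e\<in>U. Dl e)"
proof -
  have L: "Lm \<in> carrier_mat m m" and Uc: "Um \<in> carrier_mat m m" by (auto simp: Lm_def Um_def)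
  have "det Lm = prod_list (diag_mat Lm)"
    by (rule det_lower_triangular[OF _ L]) (auto simp: Lm_def)
  also have "\<dots> = 1" by (simp add: diag_mat_def Lm_def prod_list_map_upt0)
  finally have dL: "det Lm = 1" .
  have "upper_triangular Um" by (auto simp: upper_triangular_def Um_def)
  then have "det Um = prod_list (diag_mat Um)" using det_upper_triangular Uc by blast
  also have "\<dots> = (\<Prod>a = 0..<m. if odd a then Dl (g a) else 1)"
    by (simp add: diag_mat_def Um_def prod_list_map_upt0)
  also have "\<dots> = (\<Prod>j = 0..<q. Dl (g (2 * j + 1)))"
    by (subst prod_pairs) simp
  also have "\<dots> = (\<Prod>j = 0..<q. Dl (P j))"
    by (rule prod.cong) (auto simp: g_def Dl_swap)
  also have "\<dots> = (\<Prod>e\<in>U. Dl e)"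
    using prod.reindex_bij_betw[OF Pbij, of Dl] by (simp add: atLeast0LessThan)
  finally have dU: "det Um = (\<Prod>e\<in>U. Dl e)" .
  show ?thesis unfolding A_LU det_mult[OF L Uc] dL dU by simp
qed

definition Xm :: "real mat" where "Xm = 1\<^sub>m n - Wm * (Ai * Tm)"

definition Dinv :: "real mat" where "Dinv = mat n n (\<lambda>(v, w). if v = w then 1 / D v else 0)"

lemma carriers: "Am \<in> carrier_mat m m" "Tm \<in> carrier_mat m n" "Wm \<in> carrier_mat n m"
  "Ai \<in> carrier_mat m m" "Rp \<in> carrier_mat m m" "Xm \<in> carrier_mat n n" "Dinv \<in> carrier_mat n n"
  by (auto simp: Am_def Tm_def Wm_def Ai_def Rp_def Xm_def Dinv_def)

lemma det_block: "det (Am - Tm * Wm) = det Am * det Xm"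
proof -
  note c = carriers
  have TW: "Tm * Wm \<in> carrier_mat m m" using c by auto
  have AT: "Ai * Tm \<in> carrier_mat m n" using c by auto
  have K: "Wm * (Ai * Tm) \<in> carrier_mat n n" using c AT by auto
  define M where "M = four_block_mat Am Tm Wm (1\<^sub>m n)"
  have "four_block_mat (1\<^sub>m m) Tm (0\<^sub>m n m) (1\<^sub>m n) * four_block_mat (Am - Tm * Wm) (0\<^sub>m m n) Wm (1\<^sub>m n)
     = four_block_mat (1\<^sub>m m * (Am - Tm * Wm) + Tm * Wm) (1\<^sub>m m * 0\<^sub>m m n + Tm * 1\<^sub>m n)
         (0\<^sub>m n m * (Am - Tm * Wm) + 1\<^sub>m n * Wm) (0\<^sub>m n m * 0\<^sub>m m n + 1\<^sub>m n * 1\<^sub>m n)"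
    by (rule mult_four_block_mat) (use c TW in auto)
  also have "\<dots> = M"
  proof -
    have "1\<^sub>m m * (Am - Tm * Wm) + Tm * Wm = Am"
      using c TW by (simp add: mat_minus_add_cancel)
    moreover have "1\<^sub>m m * 0\<^sub>m m n + Tm * 1\<^sub>m n = Tm" using c by auto
    moreover have "0\<^sub>m n m * (Am - Tm * Wm) + 1\<^sub>m n * Wm = Wm" using c TW by auto
    moreover have "0\<^sub>m n m * 0\<^sub>m m n + 1\<^sub>m n * 1\<^sub>m n = (1\<^sub>m n :: real mat)" by auto
    ultimately show ?thesis unfolding M_def by simp
  qed
  finally have M1: "M = four_block_mat (1\<^sub>m m) Tm (0\<^sub>m n m) (1\<^sub>m n) * four_block_mat (Am - Tm * Wm) (0\<^sub>m m n) Wm (1\<^sub>m n)" by simp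
  have "four_block_mat Am (0\<^sub>m m n) Wm Xm * four_block_mat (1\<^sub>m m) (Ai * Tm) (0\<^sub>m n m) (1\<^sub>m n)
     = four_block_mat (Am * 1\<^sub>m m + 0\<^sub>m m n * 0\<^sub>m n m) (Am * (Ai * Tm) + 0\<^sub>m m n * 1\<^sub>m n)
         (Wm * 1\<^sub>m m + Xm * 0\<^sub>m n m) (Wm * (Ai * Tm) + Xm * 1\<^sub>m n)"
    by (rule mult_four_block_mat) (use c AT in auto)
  also have "\<dots> = M"
  proof -
    have "Am * 1\<^sub>m m + 0\<^sub>m m n * 0\<^sub>m n m = Am" using c by auto
    moreover have "Am * (Ai * Tm) = Tm"
      using assoc_mult_mat[of Am m m Ai m Tm n] c A_Ai by simp
    then have "Am * (Ai * Tm) + 0\<^sub>m m n * 1\<^sub>m n = Tm" using c by auto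
    moreover have "Wm * 1\<^sub>m m + Xm * 0\<^sub>m n m = Wm" using c by auto
    moreover have "Wm * (Ai * Tm) + Xm * 1\<^sub>m n = 1\<^sub>m n"
      using c K unfolding Xm_def by (rule_tac mat_add_one_minus) auto
    ultimately show ?thesis unfolding M_def by simp
  qed
  finally have M2: "M = four_block_mat Am (0\<^sub>m m n) Wm Xm * four_block_mat (1\<^sub>m m) (Ai * Tm) (0\<^sub>m n m) (1\<^sub>m n)" by simp
  have F1: "four_block_mat (1\<^sub>m m) Tm (0\<^sub>m n m) (1\<^sub>m n) \<in> carrier_mat (m + n) (m + n)" using c by auto
  have F2: "four_block_mat (Am - Tm * Wm) (0\<^sub>m m n) Wm (1\<^sub>m n) \<in> carrier_mat (m + n) (m + n)" using c TW by auto
  have F3: "four_block_mat Am (0\<^sub>m m n) Wm Xm \<in> carrier_mat (m + n) (m + n)" using c by auto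
  have F4: "four_block_mat (1\<^sub>m m) (Ai * Tm) (0\<^sub>m n m) (1\<^sub>m n) \<in> carrier_mat (m + n) (m + n)" using c AT by auto
  have d1': "det (four_block_mat (1\<^sub>m m) Tm (0\<^sub>m n m) (1\<^sub>m n)) = det (1\<^sub>m m :: real mat) * det (1\<^sub>m n :: real mat)"
    by (rule det_four_block_mat_lower_left_zero) (use c in auto)
  then have d1: "det (four_block_mat (1\<^sub>m m) Tm (0\<^sub>m n m) (1\<^sub>m n)) = 1" by simp
  have d2': "det (four_block_mat (Am - Tm * Wm) (0\<^sub>m m n) Wm (1\<^sub>m n)) = det (Am - Tm * Wm) * det (1\<^sub>m n :: real mat)"
    by (rule det_four_block_mat_upper_right_zero) (use c TW in auto)
  then have d2: "det (four_block_mat (Am - Tm * Wm) (0\<^sub>m m n) Wm (1\<^sub>m n)) = det (Am - Tm * Wm)" by simp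
  have d3: "det (four_block_mat Am (0\<^sub>m m n) Wm Xm) = det Am * det Xm"
    by (rule det_four_block_mat_upper_right_zero) (use c in auto)
  have d4': "det (four_block_mat (1\<^sub>m m) (Ai * Tm) (0\<^sub>m n m) (1\<^sub>m n)) = det (1\<^sub>m m :: real mat) * det (1\<^sub>m n :: real mat)"
    by (rule det_four_block_mat_lower_left_zero) (use c AT in auto)
  then have d4: "det (four_block_mat (1\<^sub>m m) (Ai * Tm) (0\<^sub>m n m) (1\<^sub>m n)) = 1" by simp
  have "det M = det (Am - Tm * Wm)" unfolding M1 det_mult[OF F1 F2] d1 d2 by simp
  moreover have "det M = det Am * det Xm" unfolding M2 det_mult[OF F3 F4] d3 d4 by simp
  ultimately show ?thesis by simp
qed

lemma Xm_eq: "Xm = Dinv * (1\<^sub>m n - R)"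
proof (rule eq_matI)
  show "dim_row Xm = dim_row (Dinv * (1\<^sub>m n - R))" by (simp add: Xm_def Dinv_def Wm_def)
  show "dim_col Xm = dim_col (Dinv * (1\<^sub>m n - R))" using carrier by (simp add: Xm_def Tm_def)
  fix v w assume "v < dim_row (Dinv * (1\<^sub>m n - R))" "w < dim_col (Dinv * (1\<^sub>m n - R))"
  then have v: "v < n" and w: "w < n" using carrier by (auto simp: Dinv_def)
  have Dv: "D v > 0" using Dpos v by auto
  have "(Dinv * (1\<^sub>m n - R)) $$ (v, w) = (\<Sum>c = 0..<n. (if v = c then 1 / D v else 0) * (1\<^sub>m n - R) $$ (c, w))"
    using v w carrier by (simp add: Dinv_def scalar_prod_def)
  also have "\<dots> = (1\<^sub>m n - R) $$ (v, w) / D v"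
    by (subst sum_one_pt[where a = v]) (use v in auto)
  also have "\<dots> = ((if v = w then 1 else 0) - R $$ (v, w)) / D v"
    using v w carrier by simp
  finally have r: "(Dinv * (1\<^sub>m n - R)) $$ (v, w) = ((if v = w then 1 else 0) - R $$ (v, w)) / D v" .
  have l: "Xm $$ (v, w) = (if v = w then 1 else 0) - (if v = w then - (1 - D v) / D v else R $$ (v, w) / D v)"
    using v w K_index[OF v w] carriers by (simp add: Xm_def Wm_def Tm_def)
  show "Xm $$ (v, w) = (Dinv * (1\<^sub>m n - R)) $$ (v, w)"
    unfolding l r using Dv diag0[OF v] by (auto simp: field_simps)
qed

lemma det_Xm: "det Xm = (\<Prod>v = 0..<n. 1 / D v) * det (1\<^sub>m n - R)"
proof -
  have "det Dinv = (\<Prod>v = 0..<n. Dinv $$ (v, v))"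
    by (rule det_diag_prod) (auto simp: Dinv_def)
  also have "\<dots> = (\<Prod>v = 0..<n. 1 / D v)" by (rule prod.cong) (auto simp: Dinv_def)
  finally have "det Dinv = (\<Prod>v = 0..<n. 1 / D v)" .
  moreover have "1\<^sub>m n - R \<in> carrier_mat n n" using carrier by auto
  ultimately show ?thesis unfolding Xm_eq using det_mult carriers by metis
qed

lemma main_det: "det (1\<^sub>m m - Rp) = (\<Prod>e\<in>U. Dl e) * ((\<Prod>v = 0..<n. 1 / D v) * det (1\<^sub>m n - R))"
  unfolding claim1 det_block det_Am det_Xm ..

end

theorem theorem5:
  fixes n :: nat and R :: "real mat"
  assumes "R \<in> carrier_mat n n"
    and "\<forall>i<n. \<forall>j<n. R $$ (i, j) = R $$ (j, i)"
    and "\<forall>i<n. R $$ (i, i) = 0"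
    and "spectral_radius (map_mat (\<lambda>x. complex_of_real \<bar>x\<bar>) R) < 1"
  shows "inverse (det (1\<^sub>m n - R)) =
         Z_bp n R * inverse (det_on (dir_edges n R)
            (\<lambda>e f. (if e = f then 1 else 0) - R_prime n R e f))"
proof -
  note carrier = assms(1) and symm = assms(2) and diag = assms(3) and sr = assms(4)
  obtain x where xpos: "\<forall>i<n. x i > 0" and xsum: "\<forall>i<n. (\<Sum>j = 0..<n. \<bar>R $$ (i, j)\<bar> * x j) \<le> x i - 1 / 2"
    using pos_vec[OF carrier symm sr] by blast
  define \<beta> where "\<beta> = (\<lambda>i j. 1 - alpha_excl n R i j)"
  define D where "D = (\<lambda>i. 1 - (\<Sum>k\<in>nbrs n R i. alpha n R k i))"
  have Dpos: "\<And>v. v < n \<Longrightarrow> D v > 0"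
    unfolding D_def using alpha_full_pos[OF carrier symm xpos xsum] by blast
  have bpos': "\<And>i j. i < n \<Longrightarrow> j < n \<Longrightarrow> \<beta> i j > 0"
    unfolding \<beta>_def alpha_excl_def using alpha_denom_pos[OF carrier symm xpos xsum] by blast
  have bpos: "\<And>i j. (i, j) \<in> dir_edges n R \<Longrightarrow> \<beta> i j > 0"
    using bpos' by (auto simp: dir_edges_def)
  have fixpt: "\<And>i j. i < n \<Longrightarrow> j < n \<Longrightarrow> alpha n R i j = (R $$ (i, j))\<^sup>2 / \<beta> i j"
    unfolding \<beta>_def alpha_excl_def using alpha_fix[OF carrier symm xpos xsum] by blast
  have fin: "\<And>i. finite (nbrs n R i)"
    by (rule finite_subset[of _ "{0..<n}"]) (auto simp: nbrs_def)
  have key: "\<And>i j. (i, j) \<in> dir_edges n R \<Longrightarrow> \<beta> i j * \<beta> j i - (R $$ (i, j))\<^sup>2 = D i * \<beta> j i"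
  proof -
    fix i j assume e: "(i, j) \<in> dir_edges n R"
    then have i: "i < n" and j: "j < n" and jn: "j \<in> nbrs n R i" by (auto simp: dir_edges_def nbrs_def)
    have "(\<Sum>k\<in>nbrs n R i. alpha n R k i) = alpha n R j i + (\<Sum>k\<in>nbrs n R i - {j}. alpha n R k i)"
      using fin jn by (simp add: sum.remove)
    then have bij: "\<beta> i j = D i + alpha n R j i" unfolding \<beta>_def D_def alpha_excl_def by simp
    have bji: "\<beta> j i > 0" using bpos' i j by auto
    have "alpha n R j i * \<beta> j i = (R $$ (i, j))\<^sup>2" using fixpt[OF j i] bji symm i j by simp
    then show "\<beta> i j * \<beta> j i - (R $$ (i, j))\<^sup>2 = D i * \<beta> j i" unfolding bij by (simp add: algebra_simps)
  qed
  have diagsum: "\<And>v. v < n \<Longrightarrow> (\<Sum>k\<in>nbrs n R v. (R $$ (v, k))\<^sup>2 / \<beta> k v) = 1 - D v"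
  proof -
    fix v assume v: "v < n"
    have "(\<Sum>k\<in>nbrs n R v. (R $$ (v, k))\<^sup>2 / \<beta> k v) = (\<Sum>k\<in>nbrs n R v. alpha n R k v)"
    proof (rule sum.cong)
      fix k assume "k \<in> nbrs n R v"
      then have k: "k < n" by (auto simp: nbrs_def)
      show "(R $$ (v, k))\<^sup>2 / \<beta> k v = alpha n R k v" using fixpt[OF k v] symm k v by simp
    qed simp
    then show "(\<Sum>k\<in>nbrs n R v. (R $$ (v, k))\<^sup>2 / \<beta> k v) = 1 - D v" unfolding D_def by simp
  qed
  have finU: "finite (undir_edges n R)"
    by (rule finite_subset[of _ "{0..<n} \<times> {0..<n}"]) (auto simp: undir_edges_def)
  obtain P where P0: "bij_betw P {0..<card (undir_edges n R)} (undir_edges n R)"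
    using ex_bij_betw_nat_finite[OF finU] by blast
  have Pbij: "bij_betw P {..<card (undir_edges n R)} (undir_edges n R)"
    using P0 by (simp add: atLeast0LessThan)
  interpret I: ihara n R \<beta> D "card (undir_edges n R)" P
    using carrier symm diag Dpos bpos key diagsum Pbij by unfold_locales auto
  let ?m = "2 * card (undir_edges n R)"
  have gb: "bij_betw I.g {0..<?m} (dir_edges n R)"
    using I.g_bij by (simp add: atLeast0LessThan)
  have dE: "det_on (dir_edges n R) (\<lambda>e f. (if e = f then 1 else 0) - R_prime n R e f) = det (1\<^sub>m ?m - I.Rp)"
  proof -
    have "det_on (dir_edges n R) (\<lambda>e f. (if e = f then 1 else 0) - R_prime n R e f)
      = det (mat ?m ?m (\<lambda>(a, b). (if I.g a = I.g b then 1 else 0) - R_prime n R (I.g a) (I.g b)))"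
      by (rule det_on_reindex[OF gb])
    also have "mat ?m ?m (\<lambda>(a, b). (if I.g a = I.g b then 1 else 0) - R_prime n R (I.g a) (I.g b)) = 1\<^sub>m ?m - I.Rp"
    proof (rule eq_matI)
      have rp: "\<And>k l. r_prime n R k l = I.u (k, l)" unfolding r_prime_def I.u_def by (simp add: \<beta>_def)
      fix a b assume a: "a < dim_row (1\<^sub>m ?m - I.Rp)" and b: "b < dim_col (1\<^sub>m ?m - I.Rp)"
      then have a': "a < ?m" and b': "b < ?m" by (auto simp: I.Rp_def)
      show "mat ?m ?m (\<lambda>(a, b). (if I.g a = I.g b then 1 else 0) - R_prime n R (I.g a) (I.g b)) $$ (a, b) =
         (1\<^sub>m ?m - I.Rp) $$ (a, b)"
        using a' b' I.g_eq_iff[OF a' b'] rp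
        by (simp add: I.Rp_def R_prime_def)
    qed (auto simp: I.Rp_def)
    finally show ?thesis .
  qed
  have Dl_pos: "\<And>e. e \<in> undir_edges n R \<Longrightarrow> I.Dl e > 0"
  proof -
    fix e assume e: "e \<in> undir_edges n R"
    obtain i j where ij: "e = (i, j)" by force
    have eE: "(i, j) \<in> dir_edges n R" using e ij I.U_sub by auto
    have "i < n" using eE by (auto simp: dir_edges_def)
    then show "I.Dl e > 0" using I.Dl_val[OF eE] Dpos bpos[OF eE] ij by simp
  qed
  have Zbp: "Z_bp n R = (\<Prod>e\<in>undir_edges n R. I.Dl e) * (\<Prod>v = 0..<n. 1 / D v)"
  proof -
    have zn: "\<And>i. Z_node n R i = 1 / D i" unfolding Z_node_def D_def by (simp add: inverse_eq_divide)
    have pe: "\<And>i j. (i, j) \<in> undir_edges n R \<Longrightarrow> Z_edge n R i j / (Z_node n R i * Z_node n R j) = I.Dl (i, j)"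
    proof -
      fix i j assume u: "(i, j) \<in> undir_edges n R"
      have e: "(i, j) \<in> dir_edges n R" using u I.U_sub by auto
      have e': "(j, i) \<in> dir_edges n R" using I.E_swap[OF e] by simp
      have i: "i < n" and j: "j < n" using e by (auto simp: dir_edges_def)
      have r: "R $$ (j, i) = R $$ (i, j)" using symm i j by auto
      have k1: "\<beta> i j * \<beta> j i - (R $$ (i, j))\<^sup>2 = D i * \<beta> j i" by (rule key[OF e])
      have k2: "\<beta> j i * \<beta> i j - (R $$ (i, j))\<^sup>2 = D j * \<beta> i j" using key[OF e'] r by simp
      have Di: "D i > 0" and Dj: "D j > 0" using Dpos i j by auto
      have bij: "\<beta> i j > 0" and bji: "\<beta> j i > 0" using bpos e e' by auto
      have ze: "Z_edge n R i j = 1 / (D i * \<beta> j i)"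
      proof -
        have "Z_edge n R i j = inverse (\<beta> i j * \<beta> j i - (R $$ (i, j))\<^sup>2)"
          unfolding Z_edge_def \<beta>_def by (simp add: power2_eq_square)
        then show ?thesis using k1 by (simp add: inverse_eq_divide)
      qed
      have "Z_edge n R i j / (Z_node n R i * Z_node n R j) = D j / \<beta> j i"
        unfolding ze zn using Di Dj bji by (simp add: field_simps)
      also have "\<dots> = D i / \<beta> i j" using k1 k2 bij bji by (simp add: field_simps)
      also have "\<dots> = I.Dl (i, j)" using I.Dl_val[OF e] by simp
      finally show "Z_edge n R i j / (Z_node n R i * Z_node n R j) = I.Dl (i, j)" .
    qed
    have "(\<Prod>(i, j)\<in>undir_edges n R. Z_edge n R i j / (Z_node n R i * Z_node n R j)) = (\<Prod>e\<in>undir_edges n R. I.Dl e)"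
      by (rule prod.cong) (auto simp: pe)
    moreover have "(\<Prod>i<n. Z_node n R i) = (\<Prod>v = 0..<n. 1 / D v)" by (simp add: zn atLeast0LessThan)
    ultimately show ?thesis unfolding Z_bp_def by simp
  qed
  have Znz: "Z_bp n R \<noteq> 0"
  proof -
    have "(\<Prod>e\<in>undir_edges n R. I.Dl e) \<noteq> 0" using Dl_pos finU by (simp add: prod_zero_iff) (metis less_irrefl)
    moreover have "(\<Prod>v = 0..<n. 1 / D v) \<noteq> 0" using Dpos by (simp add: prod_zero_iff) (metis less_irrefl atLeastLessThan_iff)
    ultimately show ?thesis unfolding Zbp by simp
  qed
  have "det_on (dir_edges n R) (\<lambda>e f. (if e = f then 1 else 0) - R_prime n R e f) = Z_bp n R * det (1\<^sub>m n - R)"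
    unfolding dE I.main_det Zbp by simp
  then show ?thesis using Znz by (simp add: inverse_mult_distrib)
qed

end
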